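(* Let $f\in\mathcal D$ (entire or model) and suppose $f$ satisfies the balanced growth condition on $\Omega$: there is $\rho>0$ (the order of $f$ when $f$ is entire) such that $|f'(z)|\asymp|f(z)||z|^{\rho-1}$ for $z\in\Omega$. Then $\beta_\infty\equiv0$, hence $b_\infty(t)=1-t$ for all $t\in\mathbb R$; in particular $f$ has negative spectrum and $\Theta_f=1$.
   Context: $\mathbb D=\{|z|<1\}$, $\mathbb D^*=\{|z|>1\}$, $\mathcal H=\{\Re\xi>0\}$, $Q_T=\{0<\Re\xi<4T,|\Im\xi|<4T\}$. Class $\mathcal D$: either an entire $f$ with $S(f)$ (closure of critical and finite asymptotic values) in $\mathbb D$ and finitely many components $\Omega_1,\dots,\Omega_N$ of $f^{-1}(\mathbb D^* )$ ($f=\exp\circ\tau_j$ on $\Omega_j$, $\tau_j$ conformal onto $\mathcal H$), or a model function $f=e^{\tau_j}$ on a finite disjoint union $\Omega=\bigcup\Omega_j$ of unbounded simply connected domains with conformal $\tau_j$ onto $\mathcal H$ whose inverses $\varphi_j$ satisfy $|\varphi_j(\xi_n)|\to\infty$ as $|\xi_n|\to\infty$; in both cases $\overline\Omega\cap\overline{\mathbb D}=\emptyset$ and for each $j$ there is $M$ with $|\varphi_j(\xi)|\le M|\varphi_j(\xi')|$ for $\xi,\xi'\in Q_T\setminus Q_{T/8}$, $T$ large. Spectrum: $\varphi_{j,T}(\xi)=\varphi_j(T\xi)/|\varphi_j(T)|$, $\beta_h(r,t)=\log\int_I|h'(r+iy)|^tdy/\log(1/r)$ with $I=[-2,-1]\cup[1,2]$,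 $\beta_\infty=\max_j\limsup_{T\to\infty}\beta_{\varphi_{j,T}}(1/T,t)$, $b_\infty(t)=\beta_\infty(t)-t+1$, $\Theta_f=\max_j$(smallest positive zero of $\beta_{\infty,j}-t+1$); negative spectrum: $b_\infty(t)<0$ for $t>\Theta_f$. $A\asymp B$: ratio bounded above and below by positive constants. *)

theory Defs
  imports "HOL-Analysis.Analysis"
begin

definition right_half_plane :: "complex set" where
  "right_half_plane = {\<xi>. 0 < Re \<xi>}"

definition Qsq :: "real \<Rightarrow> complex set" where
  "Qsq T = {\<xi>. 0 < Re \<xi> \<and> Re \<xi> < 4 * T \<and> \<bar>Im \<xi>\<bar> < 4 * T}"

definition critical_values :: "(complex \<Rightarrow> complex) \<Rightarrow> complex set" where
  "critical_values f = {f z | z. deriv f z = 0}"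

definition asymptotic_values :: "(complex \<Rightarrow> complex) \<Rightarrow> complex set" where
  "asymptotic_values f = {a. \<exists>\<gamma> :: real \<Rightarrow> complex.
      continuous_on {0..<1} \<gamma> \<and>
      filterlim (\<lambda>s. norm (\<gamma> s)) at_top (at_left 1) \<and>
      ((\<lambda>s. f (\<gamma> s)) \<longlongrightarrow> a) (at_left 1)}"

definition singular_set :: "(complex \<Rightarrow> complex) \<Rightarrow> complex set" where
  "singular_set f = closure (critical_values f \<union> asymptotic_values f)"

definition conformal_onto_H ::
  "complex set \<Rightarrow> (complex \<Rightarrow> complex) \<Rightarrow> (complex \<Rightarrow> complex) \<Rightarrow> bool" where
  "conformal_onto_H U \<tau> \<phi> \<longleftrightarrow>
     \<tau> holomorphic_on U \<and> \<phi> holomorphic_on right_half_plane \<and>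
     \<tau> ` U = right_half_plane \<and> \<phi> ` right_half_plane = U \<and>
     (\<forall>z\<in>U. \<phi> (\<tau> z) = z) \<and> (\<forall>\<xi>\<in>right_half_plane. \<tau> (\<phi> \<xi>) = \<xi>)"

definition common_D_conditions ::
  "(complex \<Rightarrow> complex) \<Rightarrow> nat \<Rightarrow> (nat \<Rightarrow> complex set) \<Rightarrow>
   (nat \<Rightarrow> complex \<Rightarrow> complex) \<Rightarrow> (nat \<Rightarrow> complex \<Rightarrow> complex) \<Rightarrow> bool" where
  "common_D_conditions f N \<Omega> \<tau> \<phi> \<longleftrightarrow>
     1 \<le> N \<and>
     (\<forall>j<N. conformal_onto_H (\<Omega> j) (\<tau> j) (\<phi> j)) \<and>
     (\<forall>j<N. \<forall>z\<in>\<Omega> j. f z = exp (\<tau> j z)) \<and>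
     closure (\<Union>j<N. \<Omega> j) \<inter> cball 0 1 = {} \<and>
     (\<forall>j<N. \<exists>M. \<exists>T0. \<forall>T\<ge>T0. \<forall>\<xi>\<in>Qsq T - Qsq (T/8). \<forall>\<xi>'\<in>Qsq T - Qsq (T/8).
         norm (\<phi> j \<xi>) \<le> M * norm (\<phi> j \<xi>'))"

definition class_D_entire ::
  "(complex \<Rightarrow> complex) \<Rightarrow> nat \<Rightarrow> (nat \<Rightarrow> complex set) \<Rightarrow>
   (nat \<Rightarrow> complex \<Rightarrow> complex) \<Rightarrow> (nat \<Rightarrow> complex \<Rightarrow> complex) \<Rightarrow> bool" where
  "class_D_entire f N \<Omega> \<tau> \<phi> \<longleftrightarrow>
     f holomorphic_on UNIV \<and>
     singular_set f \<subseteq> ball 0 1 \<and>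
     inj_on \<Omega> {..<N} \<and>
     \<Omega> ` {..<N} = components {z. 1 < norm (f z)} \<and>
     common_D_conditions f N \<Omega> \<tau> \<phi>"

definition class_D_model ::
  "(complex \<Rightarrow> complex) \<Rightarrow> nat \<Rightarrow> (nat \<Rightarrow> complex set) \<Rightarrow>
   (nat \<Rightarrow> complex \<Rightarrow> complex) \<Rightarrow> (nat \<Rightarrow> complex \<Rightarrow> complex) \<Rightarrow> bool" where
  "class_D_model f N \<Omega> \<tau> \<phi> \<longleftrightarrow>
     (\<forall>j<N. open (\<Omega> j) \<and> connected (\<Omega> j) \<and> \<Omega> j \<noteq> {} \<and>
            \<not> bounded (\<Omega> j) \<and> simply_connected (\<Omega> j)) \<and>
     (\<forall>i<N. \<forall>j<N. i \<noteq> j \<longrightarrow> \<Omega> i \<inter> \<Omega> j = {}) \<and>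
     (\<forall>j<N. \<forall>\<xi> :: nat \<Rightarrow> complex. (\<forall>n. \<xi> n \<in> right_half_plane) \<longrightarrow>
          filterlim (\<lambda>n. norm (\<xi> n)) at_top sequentially \<longrightarrow>
          filterlim (\<lambda>n. norm (\<phi> j (\<xi> n))) at_top sequentially) \<and>
     common_D_conditions f N \<Omega> \<tau> \<phi>"

definition class_D ::
  "(complex \<Rightarrow> complex) \<Rightarrow> nat \<Rightarrow> (nat \<Rightarrow> complex set) \<Rightarrow>
   (nat \<Rightarrow> complex \<Rightarrow> complex) \<Rightarrow> (nat \<Rightarrow> complex \<Rightarrow> complex) \<Rightarrow> bool" where
  "class_D f N \<Omega> \<tau> \<phi> \<longleftrightarrow> class_D_entire f N \<Omega> \<tau> \<phi> \<or> class_D_model f N \<Omega> \<tau> \<phi>"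

definition balanced_growth :: "(complex \<Rightarrow> complex) \<Rightarrow> complex set \<Rightarrow> bool" where
  "balanced_growth f U \<longleftrightarrow> (\<exists>\<rho>>0. \<exists>c>0. \<exists>C>0. \<forall>z\<in>U.
      c * (norm (f z) * norm z powr (\<rho> - 1)) \<le> norm (deriv f z) \<and>
      norm (deriv f z) \<le> C * (norm (f z) * norm z powr (\<rho> - 1)))"

definition Iset :: "real set" where
  "Iset = {-2..-1} \<union> {1..2}"

definition beta_fun :: "(complex \<Rightarrow> complex) \<Rightarrow> real \<Rightarrow> real \<Rightarrow> real" where
  "beta_fun h r t =
     ln (integral Iset (\<lambda>y. norm (deriv h (Complex r y)) powr t)) / ln (1 / r)"

definition phi_rescaled :: "(complex \<Rightarrow> complex) \<Rightarrow> real \<Rightarrow> complex \<Rightarrow> complex" where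
  "phi_rescaled \<phi>j T \<xi> = \<phi>j (of_real T * \<xi>) / of_real (norm (\<phi>j (of_real T)))"

definition beta_inf_j :: "(complex \<Rightarrow> complex) \<Rightarrow> real \<Rightarrow> ereal" where
  "beta_inf_j \<phi>j t = Limsup at_top (\<lambda>T. ereal (beta_fun (phi_rescaled \<phi>j T) (1 / T) t))"

definition beta_inf :: "nat \<Rightarrow> (nat \<Rightarrow> complex \<Rightarrow> complex) \<Rightarrow> real \<Rightarrow> ereal" where
  "beta_inf N \<phi> t = Max ((\<lambda>j. beta_inf_j (\<phi> j) t) ` {..<N})"

definition b_inf :: "nat \<Rightarrow> (nat \<Rightarrow> complex \<Rightarrow> complex) \<Rightarrow> real \<Rightarrow> ereal" where
  "b_inf N \<phi> t = beta_inf N \<phi> t - ereal t + 1"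

definition Theta_j :: "(complex \<Rightarrow> complex) \<Rightarrow> real" where
  "Theta_j \<phi>j = Inf {t. 0 < t \<and> beta_inf_j \<phi>j t - ereal t + 1 = 0}"

definition Theta :: "nat \<Rightarrow> (nat \<Rightarrow> complex \<Rightarrow> complex) \<Rightarrow> real" where
  "Theta N \<phi> = Max ((\<lambda>j. Theta_j (\<phi> j)) ` {..<N})"

definition negative_spectrum :: "nat \<Rightarrow> (nat \<Rightarrow> complex \<Rightarrow> complex) \<Rightarrow> bool" where
  "negative_spectrum N \<phi> \<longleftrightarrow> (\<forall>t > Theta N \<phi>. b_inf N \<phi> t < 0)"

end

theory Submission
  imports Defs "HOL-Complex_Analysis.Complex_Analysis"
begin

lemma powr_between:
  fixes x y M e :: real
  assumes "x > 0" "y > 0" "M \<ge> 1" "x \<le> M*y" "y \<le> M*x"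
  shows "x powr e \<le> M powr \<bar>e\<bar> * y powr e"
proof (cases "e \<ge> 0")
  case True
  have "x powr e \<le> (M*y) powr e" using assms True by (intro powr_mono2) auto
  also have "\<dots> = M powr \<bar>e\<bar> * y powr e" using assms True by (simp add: powr_mult)
  finally show ?thesis .
next
  case False
  have "y / M \<le> x" using assms by (simp add: divide_le_eq mult.commute)
  hence "x powr e \<le> (y/M) powr e" using assms False by (intro powr_mono2') auto
  also have "\<dots> = y powr e / M powr e" using assms by (simp add: powr_divide)
  also have "\<dots> = M powr \<bar>e\<bar> * y powr e" using assms False
    by (simp add: powr_minus divide_inverse)
  finally show ?thesis .
qed

lemma phi_deriv_bounds:
  assumes conf: "conformal_onto_H U \<tau> \<phi>" and oU: "open U"
    and fU: "\<forall>z\<in>U. f z = exp (\<tau> z)" and n1: "\<forall>z\<in>U. 1 < norm z"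
    and cpos: "c > 0" and Cpos: "C > 0"
    and bg: "\<forall>z\<in>U. c*(norm(f z)*norm z powr(\<rho>-1)) \<le> norm(deriv f z) \<and>
                     norm(deriv f z) \<le> C*(norm(f z)*norm z powr(\<rho>-1))"
    and \<xi>: "0 < Re \<xi>"
  shows "1 < norm(\<phi> \<xi>) \<and> 1/(C*norm(\<phi> \<xi>) powr (\<rho>-1)) \<le> norm(deriv \<phi> \<xi>) \<and>
         norm(deriv \<phi> \<xi>) \<le> 1/(c*norm(\<phi> \<xi>) powr(\<rho>-1))"
proof -
  have oH: "open right_half_plane" unfolding right_half_plane_def by (rule open_halfspace_Re_gt)
  have \<xi>H: "\<xi> \<in> right_half_plane" using \<xi> by (simp add: right_half_plane_def)
  note cf = conf[unfolded conformal_onto_H_def]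
  define z where "z = \<phi> \<xi>"
  have zU: "z \<in> U" using cf \<xi>H z_def by blast
  have dt: "(\<tau> has_field_derivative deriv \<tau> z) (at z)"
    using cf oU zU by (intro holomorphic_derivI) auto
  have dp: "(\<phi> has_field_derivative deriv \<phi> \<xi>) (at \<xi>)"
    using cf oH \<xi>H by (intro holomorphic_derivI) auto
  have "((\<tau> \<circ> \<phi>) has_field_derivative deriv \<tau> z * deriv \<phi> \<xi>) (at \<xi>)"
    using DERIV_chain[OF dt[unfolded z_def] dp] by (simp add: z_def)
  hence "((\<lambda>x. x) has_field_derivative deriv \<tau> z * deriv \<phi> \<xi>) (at \<xi>)"
    by (rule has_field_derivative_transform_within_open[OF _ oH \<xi>H]) (use cf in auto)
  hence one: "deriv \<tau> z * deriv \<phi> \<xi> = 1"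
    using DERIV_ident DERIV_unique by blast
  have "((\<lambda>x. exp (\<tau> x)) has_field_derivative exp (\<tau> z) * deriv \<tau> z) (at z)"
    using DERIV_chain[OF DERIV_exp dt] by (simp add: o_def)
  hence "(f has_field_derivative exp (\<tau> z) * deriv \<tau> z) (at z)"
    by (rule has_field_derivative_transform_within_open[OF _ oU zU]) (use fU in auto)
  hence df: "deriv f z = exp (\<tau> z) * deriv \<tau> z" by (rule DERIV_imp_deriv)
  have fz: "norm (f z) = norm (exp (\<tau> z))" using fU zU by simp
  have fpos: "norm (exp (\<tau> z)) > 0" by simp
  define P where "P = norm z powr (\<rho>-1)"
  have Ppos: "P > 0" using n1 zU P_def by auto
  define E where "E = norm (exp (\<tau> z))"
  have bb: "c*(E*P) \<le> E * norm (deriv \<tau> z) \<and> E * norm (deriv \<tau> z) \<le> C*(E*P)"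
    using bspec[OF bg zU] unfolding df fz norm_mult P_def E_def by blast
  have b1: "c * P \<le> norm (deriv \<tau> z)"
    using bb fpos unfolding E_def[symmetric]
    by (metis mult.left_commute mult_le_cancel_left_pos)
  have b2: "norm (deriv \<tau> z) \<le> C * P"
    using bb fpos unfolding E_def[symmetric]
    by (metis mult.left_commute mult_le_cancel_left_pos)
  have tpos: "norm (deriv \<tau> z) > 0" using b1 cpos Ppos by (smt (verit) mult_pos_pos)
  have dpn: "norm (deriv \<phi> \<xi>) = 1 / norm (deriv \<tau> z)"
    using arg_cong[OF one, of norm] tpos by (simp add: norm_mult eq_divide_eq mult.commute)
  have "1/(C*P) \<le> 1 / norm (deriv \<tau> z)"
    using b2 tpos Cpos Ppos by (intro divide_left_mono) auto
  moreover have "1 / norm (deriv \<tau> z) \<le> 1/(c*P)"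
    using b1 cpos Ppos tpos by (intro divide_left_mono) auto
  ultimately show ?thesis using n1 zU dpn by (simp add: z_def P_def)
qed
lemma ode_bound:
  fixes \<phi> :: "complex \<Rightarrow> complex"
  assumes holo: "\<phi> holomorphic_on right_half_plane" and cpos: "c > 0" and rpos: "\<rho> > 0"
    and D: "\<And>\<xi>. 0 < Re \<xi> \<Longrightarrow> 1 < norm(\<phi> \<xi>) \<and>
             norm(deriv \<phi> \<xi>) \<le> 1/(c*norm(\<phi> \<xi>) powr(\<rho>-1))"
    and T: "T \<ge> 1"
  shows "norm (\<phi> (of_real T)) powr \<rho> \<le> norm (\<phi> 1) powr \<rho> + (\<rho>/c) * (T - 1)"
proof -
  have oH: "open right_half_plane" unfolding right_half_plane_def by (rule open_halfspace_Re_gt)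
  define h where "h = (\<lambda>s::real. norm (\<phi> (of_real s)) powr \<rho>)"
  have "(\<lambda>s. (\<rho>/c) * s - h s) 1 \<le> (\<lambda>s. (\<rho>/c) * s - h s) T"
  proof (rule DERIV_nonneg_imp_nondecreasing[OF T])
    fix s :: real assume s: "1 \<le> s" "s \<le> T"
    have sH: "of_real s \<in> right_half_plane" using s by (simp add: right_half_plane_def)
    have Ds: "1 < norm (\<phi> (of_real s))" "norm(deriv \<phi> (of_real s)) \<le> 1/(c*norm(\<phi> (of_real s)) powr(\<rho>-1))"
      using D[of "of_real s"] s by auto
    define g where "g = \<phi> (of_real s)"
    define d where "d = deriv \<phi> (of_real s)"
    have dp: "(\<phi> has_field_derivative d) (at (of_real s))"
      unfolding d_def using holo oH sH by (intro holomorphic_derivI) auto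
    have gv: "((\<lambda>x. \<phi> (of_real x)) has_vector_derivative d) (at s)"
      by (rule has_vector_derivative_real_field[OF dp])
    have gnz: "g \<noteq> 0" using Ds g_def by auto
    have nd: "((\<lambda>x. norm (\<phi> (of_real x))) has_derivative (\<lambda>h. (h *\<^sub>R d) \<bullet> sgn g)) (at s)"
      using has_derivative_compose[OF gv[unfolded has_vector_derivative_def] has_derivative_norm[OF gnz, unfolded g_def]]
      by (simp add: g_def)
    define E where "E = d \<bullet> sgn g"
    have "(\<lambda>h. (h *\<^sub>R d) \<bullet> sgn g) = (*) E" by (auto simp: E_def fun_eq_iff)
    hence nd': "((\<lambda>x. norm (\<phi> (of_real x))) has_real_derivative E) (at s)"
      using nd by (simp add: has_field_derivative_def)
    have hd: "(h has_real_derivative \<rho> * norm g powr (\<rho> - 1) * E) (at s)"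
      unfolding h_def using DERIV_fun_powr[OF nd', of \<rho>] gnz by (simp add: g_def)
    have "\<bar>E\<bar> \<le> norm d * norm (sgn g)" unfolding E_def by (rule Cauchy_Schwarz_ineq2)
    hence Eb: "\<bar>E\<bar> \<le> norm d" using gnz by (simp add: norm_sgn)
    have Pp: "norm g powr (\<rho> - 1) > 0" using gnz by simp
    have "\<rho> * norm g powr (\<rho> - 1) * E \<le> \<rho> * norm g powr (\<rho> - 1) * norm d"
      using Eb rpos Pp by (intro mult_left_mono) auto
    also have "\<dots> \<le> \<rho> * norm g powr (\<rho> - 1) * (1/(c*norm g powr(\<rho>-1)))"
      using Ds rpos Pp by (intro mult_left_mono) (auto simp: g_def d_def)
    also have "\<dots> = \<rho>/c" using Pp cpos by (simp add: field_simps)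
    finally have le: "\<rho> * norm g powr (\<rho> - 1) * E \<le> \<rho>/c" .
    have "((\<lambda>s. (\<rho>/c) * s - h s) has_real_derivative (\<rho>/c) - \<rho> * norm g powr (\<rho> - 1) * E) (at s)"
      using DERIV_diff[OF DERIV_cmult[OF DERIV_ident, of "\<rho>/c"] hd] by simp
    thus "\<exists>y. ((\<lambda>s. (\<rho>/c) * s - h s) has_real_derivative y) (at s) \<and> 0 \<le> y"
      using le by auto
  qed
  thus ?thesis by (simp add: h_def algebra_simps diff_divide_distrib)
qed
lemma resc_deriv:
  assumes holo: "\<phi> holomorphic_on right_half_plane" and T: "T > 0"
  shows "deriv (phi_rescaled \<phi> T) (Complex (1/T) y) =
         of_real T * deriv \<phi> (Complex 1 (T*y)) / of_real (norm (\<phi> (of_real T)))"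
proof -
  have oH: "open right_half_plane" unfolding right_half_plane_def by (rule open_halfspace_Re_gt)
  have w: "of_real T * Complex (1/T) y = Complex 1 (T*y)" using T
    by (simp add: complex_eq_iff)
  have wH: "Complex 1 (T*y) \<in> right_half_plane" by (simp add: right_half_plane_def)
  have dp: "(\<phi> has_field_derivative deriv \<phi> (Complex 1 (T*y))) (at (Complex 1 (T*y)))"
    using holo oH wH by (intro holomorphic_derivI) auto
  have dl: "((\<lambda>\<xi>. of_real T * \<xi>) has_field_derivative of_real T) (at (Complex (1/T) y))"
    using DERIV_cmult[OF DERIV_ident, of "of_real T"] by simp
  have "((\<lambda>\<xi>. \<phi> (of_real T * \<xi>)) has_field_derivative deriv \<phi> (Complex 1 (T*y)) * of_real T) (at (Complex (1/T) y))"
    using DERIV_chain[OF dp[folded w] dl] by (simp add: o_def w)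
  hence "(phi_rescaled \<phi> T has_field_derivative deriv \<phi> (Complex 1 (T*y)) * of_real T / of_real (norm (\<phi> (of_real T)))) (at (Complex (1/T) y))"
    unfolding phi_rescaled_def by (rule DERIV_cdivide)
  thus ?thesis by (simp add: DERIV_imp_deriv mult.commute)
qed

lemma powr_minmax:
  fixes u a b t :: real
  assumes "0 < a" "a \<le> u" "u \<le> b"
  shows "min (a powr t) (b powr t) \<le> u powr t \<and> u powr t \<le> max (a powr t) (b powr t)"
proof (cases "t \<ge> 0")
  case True
  have "a powr t \<le> u powr t" "u powr t \<le> b powr t" using assms True by (auto intro: powr_mono2)
  thus ?thesis by auto
next
  case False
  have "u powr t \<le> a powr t" "b powr t \<le> u powr t" using assms False by (auto intro: powr_mono2')
  thus ?thesis by auto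
qed

lemma interval_int_bounds:
  fixes g :: "real \<Rightarrow> real"
  assumes ab: "a \<le> b" and cont: "continuous_on {a..b} g" and bnd: "\<And>y. y \<in> {a..b} \<Longrightarrow> m \<le> g y \<and> g y \<le> K"
  shows "(g has_integral integral {a..b} g) {a..b} \<and> (b - a) * m \<le> integral {a..b} g \<and> integral {a..b} g \<le> (b-a) * K"
proof -
  have gi: "g integrable_on {a..b}" using cont by (rule integrable_continuous_real)
  have "integral {a..b} (\<lambda>x. m) \<le> integral {a..b} g"
    using bnd gi by (intro integral_le) auto
  moreover have "integral {a..b} g \<le> integral {a..b} (\<lambda>x. K)"
    using bnd gi by (intro integral_le) auto
  ultimately show ?thesis using ab gi by (auto simp: integral_const_real)
qed

lemma int_bounds_tendsto:
  fixes g :: "real \<Rightarrow> real \<Rightarrow> real"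
  assumes bnd: "\<And>T y. T \<ge> T2 \<Longrightarrow> y \<in> Iset \<Longrightarrow> a \<le> g T y \<and> g T y \<le> b" and apos: "a > 0"
    and cont: "\<And>T. T \<ge> T2 \<Longrightarrow> continuous_on UNIV (g T)"
  shows "((\<lambda>T. ln (integral Iset (\<lambda>y. g T y powr t)) / ln T) \<longlongrightarrow> 0) at_top"
proof -
  define m where "m = min (a powr t) (b powr t)"
  define K where "K = max (a powr t) (b powr t)"
  have ab: "a \<le> b" using bnd[of "max T2 0" 1] by (auto simp: Iset_def)
  have mpos: "m > 0" using apos ab by (simp add: m_def)
  have mK: "m \<le> K" by (simp add: m_def K_def)
  define L where "L = max \<bar>ln (2*m)\<bar> \<bar>ln (2*K)\<bar>"
  have Ib: "2*m \<le> integral Iset (\<lambda>y. g T y powr t) \<and> integral Iset (\<lambda>y. g T y powr t) \<le> 2*K"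
    if T: "T \<ge> T2" for T
  proof -
    have pb: "m \<le> g T y powr t \<and> g T y powr t \<le> K" if "y \<in> Iset" for y
      using powr_minmax[of a "g T y" b t] bnd[OF T that] apos unfolding m_def K_def by auto
    have gp: "g T y > 0" if "y \<in> Iset" for y using bnd[OF T that] apos by auto
    have ct: "continuous_on S (\<lambda>y. g T y powr t)" if "S \<subseteq> Iset" for S
      using that gp
      by (intro continuous_on_powr continuous_on_subset[OF cont[OF T]] continuous_on_const) force+
    have i1: "((\<lambda>y. g T y powr t) has_integral integral {-2..-1} (\<lambda>y. g T y powr t)) {-2..-1} \<and>
        (-1 - -2) * m \<le> integral {-2..-1} (\<lambda>y. g T y powr t) \<and> integral {-2..-1} (\<lambda>y. g T y powr t) \<le> (-1 - -2) * K"
      by (rule interval_int_bounds) (auto intro!: ct pb simp: Iset_def)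
    have i2: "((\<lambda>y. g T y powr t) has_integral integral {1..2} (\<lambda>y. g T y powr t)) {1..2} \<and>
        (2 - 1) * m \<le> integral {1..2} (\<lambda>y. g T y powr t) \<and> integral {1..2} (\<lambda>y. g T y powr t) \<le> (2 - 1) * K"
      by (rule interval_int_bounds) (auto intro!: ct pb simp: Iset_def)
    have "((\<lambda>y. g T y powr t) has_integral (integral {-2..-1} (\<lambda>y. g T y powr t) + integral {1..2} (\<lambda>y. g T y powr t))) Iset"
      unfolding Iset_def
      by (rule has_integral_Un) (use i1 i2 in auto)
    hence "integral Iset (\<lambda>y. g T y powr t) = integral {-2..-1} (\<lambda>y. g T y powr t) + integral {1..2} (\<lambda>y. g T y powr t)"
      by (rule integral_unique)
    thus ?thesis using i1 i2 by simp
  qed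
  have ev: "\<forall>\<^sub>F T in at_top. norm (ln (integral Iset (\<lambda>y. g T y powr t)) / ln T) \<le> L / ln T"
    using eventually_ge_at_top[of "max T2 2"]
  proof eventually_elim
    case (elim T)
    hence T: "T \<ge> T2" "T \<ge> 2" by auto
    have lnT: "ln T > 0" using T by simp
    define I where "I = integral Iset (\<lambda>y. g T y powr t)"
    have I: "2*m \<le> I" "I \<le> 2*K" using Ib[OF T(1)] unfolding I_def by auto
    have "ln (2*m) \<le> ln I" "ln I \<le> ln (2*K)" using I mpos by auto
    hence "\<bar>ln I\<bar> \<le> L" unfolding L_def by linarith
    thus ?case using lnT unfolding I_def[symmetric] by (simp add: divide_right_mono)
  qed
  have "((\<lambda>T. L / ln T) \<longlongrightarrow> 0) at_top"
    by (rule tendsto_divide_0[OF tendsto_const]) (rule filterlim_at_top_imp_at_infinity[OF ln_at_top])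
  thus ?thesis by (rule Lim_null_comparison[OF ev])
qed
lemma alg_bounds:
  fixes T p X Q C c K M S d :: real
  assumes pos: "T > 0" "p > 0" "X > 0" "Q > 0" "C > 0" "c > 0" "K > 0" "S > 0"
    and dl: "1/(C*X) \<le> d" and du: "d \<le> 1/(c*X)"
    and XQ: "X \<le> K*Q" and QX: "Q \<le> K*X"
    and lo: "T \<le> 4*M*C*(Q*p)" and up: "Q*p \<le> S*T"
  shows "1/(C*K*S) \<le> T*d/p \<and> T*d/p \<le> K*4*M*C/c"
proof
  have "1/(C*K*S) = T/(C*K*(S*T))" using pos by simp
  also have "\<dots> \<le> T/(C*K*(Q*p))" using pos up by (intro divide_left_mono mult_left_mono) auto
  also have "\<dots> = (T/p) * (1/(C*(K*Q)))" using pos by (simp add: field_simps)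
  also have "\<dots> \<le> (T/p) * (1/(C*X))" using pos XQ by (intro mult_left_mono divide_left_mono mult_left_mono) auto
  also have "\<dots> \<le> (T/p) * d" using pos dl by (intro mult_left_mono) auto
  finally show "1/(C*K*S) \<le> T*d/p" by simp
next
  have "T*d/p = (T/p) * d" by simp
  also have "\<dots> \<le> (T/p) * (1/(c*X))" using pos du by (intro mult_left_mono) auto
  also have "\<dots> \<le> (T/p) * (K/(c*Q))"
  proof -
    have "1/(c*X) \<le> K/(c*Q)" using pos QX by (simp add: field_simps mult.commute)
    thus ?thesis using pos by (intro mult_left_mono) auto
  qed
  also have "\<dots> = T * K / (c*(Q*p))" using pos by (simp add: field_simps)
  also have "\<dots> \<le> 4*M*C*(Q*p) * K / (c*(Q*p))" using pos lo by (intro divide_right_mono mult_right_mono) auto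
  also have "\<dots> = K*4*M*C/c" using pos by (simp add: field_simps)
  finally show "T*d/p \<le> K*4*M*C/c" .
qed
lemma beta_j_zero:
  fixes \<phi> :: "complex \<Rightarrow> complex"
  assumes holo: "\<phi> holomorphic_on right_half_plane" and cpos: "c > 0" and Cpos: "C > 0" and rpos: "\<rho> > 0"
    and D: "\<And>\<xi>. 0 < Re \<xi> \<Longrightarrow> 1 < norm(\<phi> \<xi>) \<and> 1/(C*norm(\<phi> \<xi>) powr (\<rho>-1)) \<le> norm(deriv \<phi> \<xi>) \<and>
             norm(deriv \<phi> \<xi>) \<le> 1/(c*norm(\<phi> \<xi>) powr(\<rho>-1))"
    and Mc: "\<exists>M. \<exists>T0. \<forall>T\<ge>T0. \<forall>\<xi>\<in>Qsq T - Qsq (T/8). \<forall>\<xi>'\<in>Qsq T - Qsq (T/8).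
         norm (\<phi> \<xi>) \<le> M * norm (\<phi> \<xi>')"
  shows "beta_inf_j \<phi> t = 0"
proof -
  obtain M T0 where MT: "\<And>T \<xi> \<xi>'. T \<ge> T0 \<Longrightarrow> \<xi> \<in> Qsq T - Qsq (T/8) \<Longrightarrow> \<xi>' \<in> Qsq T - Qsq (T/8) \<Longrightarrow>
         norm (\<phi> \<xi>) \<le> M * norm (\<phi> \<xi>')" using Mc by blast
  define T2 where "T2 = max T0 1"
  have oH: "open right_half_plane" unfolding right_half_plane_def by (rule open_halfspace_Re_gt)
  have TQ: "of_real T \<in> Qsq T - Qsq (T/8)" if "T \<ge> 1" for T using that by (simp add: Qsq_def)
  have M1: "M \<ge> 1"
  proof -
    have "norm (\<phi> (of_real T2)) \<le> M * norm (\<phi> (of_real T2))"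
      using MT[OF _ TQ TQ, of T2] by (simp add: T2_def)
    moreover have "norm (\<phi> (of_real T2)) > 1" using D[of "of_real T2"] by (simp add: T2_def)
    ultimately show ?thesis by (smt (verit) mult_le_cancel_right1)
  qed
  define A where "A = norm (\<phi> 1) powr \<rho>"
  define B where "B = \<rho>/c"
  have Apos: "A \<ge> 0" "B > 0" using rpos cpos by (auto simp: A_def B_def)
  have lowP: "T \<le> 4*M*C * norm (\<phi> (of_real T)) powr \<rho>" if T: "T \<ge> T2" for T
  proof -
    have T1: "T \<ge> 1" "T \<ge> T0" using T by (auto simp: T2_def)
    have sub: "cball (of_real T) (T/4) \<subseteq> right_half_plane"
    proof
      fix w assume "w \<in> cball (complex_of_real T) (T/4)"
      hence "norm (of_real T - w) \<le> T/4" by (simp add: dist_norm)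
      moreover have "\<bar>Re (of_real T - w)\<bar> \<le> norm (of_real T - w)" by (rule abs_Re_le_cmod)
      ultimately show "w \<in> right_half_plane" using T1 by (auto simp: right_half_plane_def)
    qed
    have cb: "norm (deriv \<phi> (of_real T)) \<le> M * norm (\<phi> (of_real T)) / (T/4)"
    proof -
      have "norm ((deriv ^^ 1) \<phi> (of_real T)) \<le> fact 1 * (M * norm (\<phi> (of_real T))) / (T/4)^1"
      proof (rule Cauchy_inequality)
        show "\<phi> holomorphic_on ball (of_real T) (T/4)"
          using holo sub ball_subset_cball by (meson holomorphic_on_subset subset_trans)
        show "continuous_on (cball (of_real T) (T/4)) \<phi>"
          using holo sub by (meson holomorphic_on_imp_continuous_on holomorphic_on_subset)
        show "0 < T/4" using T1 by simp
        fix x :: complex assume x: "norm (of_real T - x) = T/4"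
        have "\<bar>Re (complex_of_real T - x)\<bar> \<le> T/4" "\<bar>Im (complex_of_real T - x)\<bar> \<le> T/4"
          using abs_Re_le_cmod[of "complex_of_real T - x"] abs_Im_le_cmod[of "complex_of_real T - x"] x by auto
        hence "\<bar>T - Re x\<bar> \<le> T/4" "\<bar>Im x\<bar> \<le> T/4" by simp_all
        hence "3*T/4 \<le> Re x" "Re x \<le> 5*T/4" "\<bar>Im x\<bar> \<le> T/4" by arith+
        hence "x \<in> Qsq T - Qsq (T/8)" using T1 unfolding Qsq_def by auto
        thus "norm (\<phi> x) \<le> M * norm (\<phi> (of_real T))" using MT[OF T1(2) _ TQ[OF T1(1)]] by blast
      qed
      thus ?thesis by simp
    qed
    define p where "p = norm (\<phi> (of_real T))"
    have p1: "p > 1" using D[of "of_real T"] T1 by (simp add: p_def)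
    have dl: "1/(C*p powr (\<rho>-1)) \<le> norm (deriv \<phi> (of_real T))" using D[of "of_real T"] T1 by (simp add: p_def)
    have "1/(C*p powr (\<rho>-1)) \<le> 4 * M * p / T" using dl cb by (simp add: p_def mult_ac)
    hence "T \<le> 4*M*p * (C*p powr (\<rho>-1))" using T1 p1 Cpos
      by (simp add: field_simps)
    also have "\<dots> = 4*M*C*(p powr (\<rho>-1) * p)" by simp
    also have "p powr (\<rho>-1) * p = p powr \<rho>" using p1 by (simp add: powr_diff)
    finally show ?thesis by (simp add: p_def)
  qed
  have uppP: "norm (\<phi> (of_real T)) powr \<rho> \<le> (A+B) * T" if T: "T \<ge> T2" for T
  proof -
    have T1: "T \<ge> 1" using T by (auto simp: T2_def)
    have "norm (\<phi> (of_real T)) powr \<rho> \<le> A + B * (T - 1)"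
      unfolding A_def B_def by (rule ode_bound[OF holo cpos rpos _ T1]) (use D in auto)
    also have "\<dots> \<le> (A+B)*T" using Apos T1 mult_left_mono[of 1 T A] by (simp add: algebra_simps)
    finally show ?thesis .
  qed
  define K where "K = M powr \<bar>\<rho>-1\<bar>"
  have Kpos: "K > 0" using M1 by (simp add: K_def)
  define g where "g = (\<lambda>T y. norm (deriv (phi_rescaled \<phi> T) (Complex (1/T) y)))"
  have gform: "g T = (\<lambda>y. norm (of_real T * deriv \<phi> (Complex 1 (T*y)) / of_real (norm (\<phi> (of_real T)))))"
    if "T > 0" for T using resc_deriv[OF holo that] by (simp add: g_def fun_eq_iff)
  have bnd: "1/(C*K*(A+B)) \<le> g T y \<and> g T y \<le> K*4*M*C/c" if T: "T \<ge> T2" and y: "y \<in> Iset" for T y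
  proof -
    have T1: "T \<ge> 1" "T \<ge> T0" using T by (auto simp: T2_def)
    have y12: "1 \<le> \<bar>y\<bar>" "\<bar>y\<bar> \<le> 2" using y by (auto simp: Iset_def)
    define w where "w = Complex 1 (T*y)"
    have Tyb: "T \<le> \<bar>T*y\<bar>" "\<bar>T*y\<bar> \<le> 2*T" using y12 T1 by (auto simp: abs_mult mult_left_mono)
    have wQ: "w \<in> Qsq T - Qsq (T/8)" using T1 Tyb by (auto simp: Qsq_def w_def)
    define p where "p = norm (\<phi> (of_real T))"
    define q where "q = norm (\<phi> w)"
    have p1: "p > 1" using D[of "of_real T"] T1 by (simp add: p_def)
    have q1: "q > 1" using D[of w] by (simp add: q_def w_def)
    have qp: "q \<le> M*p" using MT[OF T1(2) wQ TQ[OF T1(1)]] by (simp add: p_def q_def)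
    have pq: "p \<le> M*q" using MT[OF T1(2) TQ[OF T1(1)] wQ] by (simp add: p_def q_def)
    have XQ: "q powr (\<rho>-1) \<le> K * p powr (\<rho>-1)" unfolding K_def
      by (rule powr_between) (use p1 q1 M1 qp pq in auto)
    have QX: "p powr (\<rho>-1) \<le> K * q powr (\<rho>-1)" unfolding K_def
      by (rule powr_between) (use p1 q1 M1 qp pq in auto)
    have Dw: "1/(C*q powr (\<rho>-1)) \<le> norm(deriv \<phi> w)" "norm(deriv \<phi> w) \<le> 1/(c*q powr(\<rho>-1))"
      using D[of w] by (auto simp: q_def w_def)
    have PP: "p powr (\<rho>-1) * p = p powr \<rho>" using p1 by (simp add: powr_diff)
    have lo: "T \<le> 4*M*C*(p powr (\<rho>-1) * p)" using lowP[OF T] PP by (simp add: p_def)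
    have up: "p powr (\<rho>-1) * p \<le> (A+B)*T" using uppP[OF T] PP by (simp add: p_def)
    have gT: "g T y = T * norm (deriv \<phi> w) / p"
      using gform[of T] T1 by (simp add: w_def p_def norm_mult norm_divide)
    have "1/(C*K*(A+B)) \<le> T * norm (deriv \<phi> w) / p \<and> T * norm (deriv \<phi> w) / p \<le> K*4*M*C/c"
      by (rule alg_bounds[OF _ _ _ _ Cpos cpos Kpos _ Dw XQ QX lo up])
         (use T1 p1 q1 Apos in auto)
    thus ?thesis using gT by simp
  qed
  have cont: "continuous_on UNIV (g T)" if T: "T \<ge> T2" for T
  proof -
    have Tp: "T > 0" using T by (simp add: T2_def)
    have c1: "continuous_on UNIV (\<lambda>y::real. Complex 1 (T*y))"
      unfolding Complex_eq by (intro continuous_intros)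
    have c2: "continuous_on right_half_plane (deriv \<phi>)"
      by (rule holomorphic_on_imp_continuous_on[OF holomorphic_deriv[OF holo oH]])
    have c3: "continuous_on UNIV (\<lambda>y::real. deriv \<phi> (Complex 1 (T*y)))"
      by (rule continuous_on_compose2[OF c2 c1]) (auto simp: right_half_plane_def)
    have nz: "\<phi> (of_real T) \<noteq> 0" using D[of "of_real T"] Tp by auto
    show ?thesis unfolding gform[OF Tp]
      by (intro continuous_intros c3) (use nz in auto)
  qed
  have apos: "1/(C*K*(A+B)) > 0" using Cpos Kpos Apos by simp
  have lim: "((\<lambda>T. ln (integral Iset (\<lambda>y. g T y powr t)) / ln T) \<longlongrightarrow> 0) at_top"
    by (rule int_bounds_tendsto[OF bnd apos cont])
  have eqf: "beta_fun (phi_rescaled \<phi> T) (1/T) t = ln (integral Iset (\<lambda>y. g T y powr t)) / ln T" for T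
    by (simp add: beta_fun_def g_def)
  have "((\<lambda>T. ereal (beta_fun (phi_rescaled \<phi> T) (1/T) t)) \<longlongrightarrow> ereal 0) at_top"
    unfolding eqf by (intro tendsto_intros lim)
  hence "Limsup at_top (\<lambda>T. ereal (beta_fun (phi_rescaled \<phi> T) (1/T) t)) = ereal 0"
    by (intro lim_imp_Limsup) auto
  thus ?thesis by (simp add: beta_inf_j_def zero_ereal_def)
qed

theorem proposition5p2:
  fixes f :: "complex \<Rightarrow> complex" and N :: nat and \<Omega> :: "nat \<Rightarrow> complex set"
    and \<tau> \<phi> :: "nat \<Rightarrow> complex \<Rightarrow> complex"
  assumes "class_D f N \<Omega> \<tau> \<phi>"
    and "balanced_growth f (\<Union>j<N. \<Omega> j)"
  shows "(\<forall>t. beta_inf N \<phi> t = 0) \<and> (\<forall>t. b_inf N \<phi> t = ereal (1 - t)) \<and>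
         negative_spectrum N \<phi> \<and> Theta N \<phi> = 1"
proof -
  have cD: "common_D_conditions f N \<Omega> \<tau> \<phi>" using assms(1) unfolding class_D_def
  proof
    assume "class_D_entire f N \<Omega> \<tau> \<phi>"
    thus ?thesis unfolding class_D_entire_def by (elim conjE)
  next
    assume "class_D_model f N \<Omega> \<tau> \<phi>"
    thus ?thesis unfolding class_D_model_def by (elim conjE)
  qed
  note cd = cD[unfolded common_D_conditions_def]
  note N1 = cd[THEN conjunct1]
  note cconf = cd[THEN conjunct2, THEN conjunct1]
  note cf = cd[THEN conjunct2, THEN conjunct2, THEN conjunct1]
  note ccl = cd[THEN conjunct2, THEN conjunct2, THEN conjunct2, THEN conjunct1]
  note cM = cd[THEN conjunct2, THEN conjunct2, THEN conjunct2, THEN conjunct2]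
  have opn: "open (\<Omega> j)" if j: "j < N" for j
    using assms(1) unfolding class_D_def
  proof
    assume e: "class_D_entire f N \<Omega> \<tau> \<phi>"
    have "f holomorphic_on UNIV" using e unfolding class_D_entire_def by (elim conjE)
    hence "continuous_on UNIV f" by (rule holomorphic_on_imp_continuous_on)
    hence "open {z. 1 < norm (f z)}"
      by (intro open_Collect_less continuous_intros) auto
    moreover have "\<Omega> j \<in> components {z. 1 < norm (f z)}"
      using e j unfolding class_D_entire_def by blast
    ultimately show ?thesis by (rule open_components)
  next
    assume "class_D_model f N \<Omega> \<tau> \<phi>"
    hence "\<forall>j<N. open (\<Omega> j) \<and> connected (\<Omega> j) \<and> \<Omega> j \<noteq> {} \<and>
            \<not> bounded (\<Omega> j) \<and> simply_connected (\<Omega> j)" unfolding class_D_model_def by (elim conjE)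
    thus ?thesis using j by blast
  qed
  obtain \<rho> c C where rcC: "\<rho> > 0" "c > 0" "C > 0" and
    bg: "\<forall>z\<in>(\<Union>j<N. \<Omega> j). c * (norm (f z) * norm z powr (\<rho> - 1)) \<le> norm (deriv f z) \<and>
      norm (deriv f z) \<le> C * (norm (f z) * norm z powr (\<rho> - 1))"
    using assms(2) unfolding balanced_growth_def by blast
  have bj: "beta_inf_j (\<phi> j) t = 0" if j: "j < N" for j t
  proof -
    have conf: "conformal_onto_H (\<Omega> j) (\<tau> j) (\<phi> j)" using spec[OF cconf, THEN mp, OF j] .
    have fU: "\<forall>z\<in>\<Omega> j. f z = exp (\<tau> j z)" using spec[OF cf, THEN mp, OF j] .
    have n1: "\<forall>z\<in>\<Omega> j. 1 < norm z"
    proof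
      fix z assume z: "z \<in> \<Omega> j"
      hence "z \<in> (\<Union>j<N. \<Omega> j)" using j by blast
      hence "z \<in> closure (\<Union>j<N. \<Omega> j)" by (meson closure_subset subsetD)
      hence "z \<notin> cball 0 1" using ccl by (metis IntI empty_iff)
      thus "1 < norm z" by simp
    qed
    have bgj: "\<forall>z\<in>\<Omega> j. c * (norm (f z) * norm z powr (\<rho> - 1)) \<le> norm (deriv f z) \<and>
      norm (deriv f z) \<le> C * (norm (f z) * norm z powr (\<rho> - 1))"
    proof
      fix z assume "z \<in> \<Omega> j"
      hence "z \<in> (\<Union>j<N. \<Omega> j)" using j by blast
      from bspec[OF bg this] show "c * (norm (f z) * norm z powr (\<rho> - 1)) \<le> norm (deriv f z) \<and>
        norm (deriv f z) \<le> C * (norm (f z) * norm z powr (\<rho> - 1))" .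
    qed
    have holo: "\<phi> j holomorphic_on right_half_plane" using conf[unfolded conformal_onto_H_def] by (elim conjE)
    have Mc: "\<exists>M. \<exists>T0. \<forall>T\<ge>T0. \<forall>\<xi>\<in>Qsq T - Qsq (T/8). \<forall>\<xi>'\<in>Qsq T - Qsq (T/8).
         norm (\<phi> j \<xi>) \<le> M * norm (\<phi> j \<xi>')" using spec[OF cM, THEN mp, OF j] .
    show ?thesis
    proof (rule beta_j_zero[OF holo rcC(2) rcC(3) rcC(1) _ Mc])
      fix \<xi> :: complex assume "0 < Re \<xi>"
      thus "1 < norm(\<phi> j \<xi>) \<and> 1/(C*norm(\<phi> j \<xi>) powr (\<rho>-1)) \<le> norm(deriv (\<phi> j) \<xi>) \<and>
             norm(deriv (\<phi> j) \<xi>) \<le> 1/(c*norm(\<phi> j \<xi>) powr(\<rho>-1))"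
        by (rule phi_deriv_bounds[OF conf opn[OF j] fU n1 rcC(2) rcC(3) bgj])
    qed
  qed
  have ne: "{..<N} \<noteq> {}" using N1 lessThan_empty_iff by (metis not_one_le_zero of_nat_0 of_nat_le_iff)
  have img: "(\<lambda>j. beta_inf_j (\<phi> j) t) ` {..<N} = {0}" for t
  proof -
    have "(\<lambda>j. beta_inf_j (\<phi> j) t) ` {..<N} = (\<lambda>j. 0) ` {..<N}"
      by (rule image_cong) (simp_all add: bj)
    thus ?thesis using ne image_constant_conv by metis
  qed
  have B0: "beta_inf N \<phi> t = 0" for t unfolding beta_inf_def img by simp
  have b1: "b_inf N \<phi> t = ereal (1 - t)" for t
    unfolding b_inf_def B0 by (simp add: one_ereal_def)
  have th: "Theta_j (\<phi> j) = 1" if j: "j < N" for j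
  proof -
    have "{t. 0 < t \<and> beta_inf_j (\<phi> j) t - ereal t + 1 = 0} = {1}"
      using bj[OF j] by (auto simp: one_ereal_def)
    thus ?thesis unfolding Theta_j_def by simp
  qed
  have img2: "(\<lambda>j. Theta_j (\<phi> j)) ` {..<N} = {1}"
  proof -
    have "(\<lambda>j. Theta_j (\<phi> j)) ` {..<N} = (\<lambda>j. 1) ` {..<N}"
      by (rule image_cong) (simp_all add: th)
    thus ?thesis using ne image_constant_conv by metis
  qed
  have T1: "Theta N \<phi> = 1" unfolding Theta_def img2 by simp
  have ns: "negative_spectrum N \<phi>" unfolding negative_spectrum_def T1 b1 by auto
  show ?thesis using B0 b1 ns T1 by blast
qed

end
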